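(* Let $n\geqslant 3$, $-1<\alpha<\infty$ and $0<r<1$. There exist positive constants $C_1=C_1(n,\alpha)$ and $C_2=C_2(n)$ such that for every $x\in\partial\mathbb{B}_n$, \[ C_1\frac{c_\alpha}{\alpha+1}r^{n+\alpha}(2-r)^{\alpha+1}\leqslant |\widehat{B}_\rho(x,r)|_\alpha\leqslant C_2\frac{c_\alpha}{\alpha+1}r^{n+\alpha}(2-r)^{\alpha+1}. \]
   Context: $\mathbb{B}_n$ is the real unit ball of $\mathbb{R}^n$ and $\partial\mathbb{B}_n$ its boundary sphere; $\nu$ is Lebesgue measure normalized with $\nu(\mathbb{B}_n)=1$, $d\nu_\alpha(z)=c_\alpha(1-|z|^2)^\alpha d\nu(z)$ with $c_\alpha$ such that $\nu_\alpha(\mathbb{B}_n)=1$, and $|E|_\alpha=\nu_\alpha(E)$. For $x,y\in\partial\mathbb{B}_n$, $\rho(x,y)=\arccos\langle x,y\rangle\in[0,\pi]$. For $x\in\partial\mathbb{B}_n$, $0<r<1$: $B_\rho(x,r)=\{y\in\partial\mathbb{B}_n:\rho(x,y)<r\}$ and $\widehat{B}_\rho(x,r)=\{z\in\mathbb{B}_n: z/|z|\in B_\rho(x,r),\ 1-r<|z|<1\}$. *)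

theory Defs
  imports "HOL-Analysis.Analysis"
begin

definition weight :: "real \<Rightarrow> 'a::euclidean_space \<Rightarrow> real" where
  "weight \<alpha> z = (1 - (norm z)\<^sup>2) powr \<alpha>"

text \<open>Normalizing constant c_alpha: nu_alpha(B) = 1 where nu is Lebesgue measure
  normalized so that nu(B) = 1.\<close>
definition c_alpha :: "real \<Rightarrow> 'a::euclidean_space itself \<Rightarrow> real" where
  "c_alpha \<alpha> _ = measure lborel (ball (0::'a) 1) /
     enn2real (\<integral>\<^sup>+ z\<in>ball (0::'a) 1. ennreal (weight \<alpha> z) \<partial>lborel)"

definition nu_alpha :: "real \<Rightarrow> 'a::euclidean_space set \<Rightarrow> real" where
  "nu_alpha \<alpha> E = c_alpha \<alpha> TYPE('a) / measure lborel (ball (0::'a) 1) *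
     enn2real (\<integral>\<^sup>+ z\<in>E \<inter> ball 0 1. ennreal (weight \<alpha> z) \<partial>lborel)"

definition rho :: "'a::euclidean_space \<Rightarrow> 'a \<Rightarrow> real" where
  "rho x y = arccos (inner x y)"

definition Bhat :: "'a::euclidean_space \<Rightarrow> real \<Rightarrow> 'a set" where
  "Bhat x r = {z \<in> ball 0 1. z \<noteq> 0 \<and> rho x (z /\<^sub>R norm z) < r \<and> 1 - r < norm z \<and> norm z < 1}"

end

theory Submission
  imports Defs
begin
lemma sq_lt1: "0 \<le> (x::real) \<Longrightarrow> x < 1 \<Longrightarrow> 0 < 1 - x\<^sup>2"
proof -
  assume "0 \<le> x" "x < 1"
  then have "x * x < 1 * 1" by (intro mult_strict_mono) auto
  then show ?thesis by (simp add: power2_eq_square)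
qed

lemma oneD:
  fixes a \<alpha> :: real
  assumes a: "0 \<le> a" "a < 1" and al: "\<alpha> > -1"
  shows "(\<integral>\<^sup>+t. ennreal ((1 - t\<^sup>2) powr \<alpha> * t) * indicator {a<..<1} t \<partial>lborel)
         = ennreal ((1 - a\<^sup>2) powr (\<alpha> + 1) / (2 * (\<alpha> + 1)))"
proof -
  define f where "f t = (1 - t\<^sup>2) powr \<alpha> * t" for t :: real
  define F where "F t = - ((1 - t\<^sup>2) powr (\<alpha> + 1) / (2 * (\<alpha> + 1)))" for t :: real
  have der: "DERIV F x :> f x" if "a < x" "x < 1" for x
  proof -
    have p: "0 < 1 - x\<^sup>2" using that a by (intro sq_lt1) auto
    have "DERIV (\<lambda>t. (1 - t\<^sup>2) powr (\<alpha> + 1)) x :> (\<alpha> + 1) * (1 - x\<^sup>2) powr (\<alpha> + 1 - 1) * (0 - 2 * x ^ 1 * 1)"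
      using p by (auto intro!: derivative_eq_intros)
    then have "DERIV F x :> - ((\<alpha> + 1) * (1 - x\<^sup>2) powr \<alpha> * (0 - 2 * x)) / (2 * (\<alpha> + 1))"
      unfolding F_def using p al by (auto intro!: derivative_eq_intros)
    moreover have "- ((\<alpha> + 1) * (1 - x\<^sup>2) powr \<alpha> * (0 - 2 * x)) / (2 * (\<alpha> + 1)) = f x"
      using al unfolding f_def by (simp add: field_simps)
    ultimately show ?thesis by simp
  qed
  have cont: "isCont f x" if "a < x" "x < 1" for x
  proof -
    have p: "0 < 1 - x\<^sup>2" using that a by (intro sq_lt1) auto
    show ?thesis unfolding f_def using p by (auto intro!: continuous_intros)
  qed
  have nonneg: "0 \<le> f x" if "a < x" for x using that a unfolding f_def by simp
  have A: "(F \<longlongrightarrow> F a) (at_right a)"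
  proof -
    have p: "0 < 1 - a\<^sup>2" using a by (intro sq_lt1) auto
    have "isCont F a" unfolding F_def using p al by (auto intro!: continuous_intros)
    then show ?thesis by (simp add: isCont_def filterlim_at_split)
  qed
  have B: "(F \<longlongrightarrow> 0) (at_left 1)"
  proof -
    have "((\<lambda>t. (1 - t\<^sup>2) powr (\<alpha> + 1)) \<longlongrightarrow> 0) (at_left 1)"
    proof (rule tendsto_zero_powrI)
      show "((\<lambda>t::real. 1 - t\<^sup>2) \<longlongrightarrow> 0) (at_left 1)"
        by (rule tendsto_eq_intros | simp)+
      show "((\<lambda>t. \<alpha> + 1) \<longlongrightarrow> \<alpha> + 1) (at_left 1)" by simp
      show "\<forall>\<^sub>F x in at_left 1. 0 \<le> 1 - (x::real)\<^sup>2"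
        by (rule eventually_at_leftI[of 0]) (auto simp: power_le_one)
      show "0 < \<alpha> + 1" using al by simp
    qed
    then have "((\<lambda>t. - ((1 - t\<^sup>2) powr (\<alpha> + 1) / (2 * (\<alpha> + 1)))) \<longlongrightarrow> - (0 / (2 * (\<alpha> + 1)))) (at_left 1)"
      by (intro tendsto_minus tendsto_divide tendsto_const) (use al in auto)
    then show ?thesis unfolding F_def by simp
  qed
  have I: "set_integrable lborel {a<..<1} f" "(LBINT x=ereal a..ereal 1. f x) = 0 - F a"
    using interval_integral_FTC_nonneg[of "ereal a" "ereal 1" F f "F a" 0] der cont nonneg A B a
    by (auto simp: ereal_tendsto_simps1)
  have e: "einterval (ereal a) (ereal 1) = {a<..<1}" by (auto simp: einterval_def)
  have "(\<integral>\<^sup>+t. ennreal (f t) * indicator {a<..<1} t \<partial>lborel)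
        = (\<integral>\<^sup>+t. ennreal (indicator {a<..<1} t *\<^sub>R f t) \<partial>lborel)"
    by (intro nn_integral_cong) (auto split: split_indicator)
  also have "\<dots> = ennreal (\<integral>t. indicator {a<..<1} t *\<^sub>R f t \<partial>lborel)"
    using I(1) e nonneg unfolding set_integrable_def
    by (intro nn_integral_eq_integral) (auto split: split_indicator)
  also have "(\<integral>t. indicator {a<..<1} t *\<^sub>R f t \<partial>lborel) = 0 - F a"
    using I(2) e a by (simp add: interval_lebesgue_integral_def set_lebesgue_integral_def)
  finally show ?thesis unfolding f_def F_def by simp
qed

lemma cone_scale:
  fixes K :: "'a::euclidean_space set"
  assumes K: "K \<in> sets lborel" and cone: "\<And>z c. z \<in> K \<Longrightarrow> 0 < c \<Longrightarrow> c *\<^sub>R z \<in> K" and t: "0 < t"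
  shows "emeasure lborel (K \<inter> ball 0 t) = ennreal (t ^ DIM('a)) * emeasure lborel (K \<inter> ball 0 1)"
proof -
  have L: "lborel = density (distr lborel borel (\<lambda>x::'a. 0 + (1/t) *\<^sub>R x)) (\<lambda>_. \<bar>1/t\<bar>^DIM('a))"
    by (rule lborel_affine) (use t in simp)
  have S1: "K \<inter> ball 0 1 \<in> sets lborel" using K by simp
  have pre: "(\<lambda>x::'a. 0 + (1/t) *\<^sub>R x) -` (K \<inter> ball 0 1) \<inter> space lborel = K \<inter> ball 0 t"
  proof (intro equalityI subsetI)
    fix x assume "x \<in> (\<lambda>x::'a. 0 + (1/t) *\<^sub>R x) -` (K \<inter> ball 0 1) \<inter> space lborel"
    then have a: "(1/t) *\<^sub>R x \<in> K" "norm ((1/t) *\<^sub>R x) < 1" by auto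
    have "t *\<^sub>R ((1/t) *\<^sub>R x) \<in> K" using cone[OF a(1) t] .
    then have "x \<in> K" using t by simp
    moreover have "norm x < t" using a(2) t by (simp add: divide_less_eq)
    ultimately show "x \<in> K \<inter> ball 0 t" by simp
  next
    fix x assume "x \<in> K \<inter> ball 0 t"
    then show "x \<in> (\<lambda>x::'a. 0 + (1/t) *\<^sub>R x) -` (K \<inter> ball 0 1) \<inter> space lborel"
      using cone[of x "1/t"] t by (auto simp: divide_less_eq)
  qed
  have "emeasure lborel (K \<inter> ball 0 1) = emeasure (density (distr lborel borel (\<lambda>x::'a. 0 + (1/t) *\<^sub>R x)) (\<lambda>_. \<bar>1/t\<bar>^DIM('a))) (K \<inter> ball 0 1)"
    using L by simp
  also have "\<dots> = (\<integral>\<^sup>+x. ennreal (\<bar>1/t\<bar>^DIM('a)) * indicator (K \<inter> ball 0 1) x \<partial>distr lborel borel (\<lambda>x::'a. 0 + (1/t) *\<^sub>R x))"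
    using S1 by (subst emeasure_density) auto
  also have "\<dots> = ennreal (\<bar>1/t\<bar>^DIM('a)) * emeasure (distr lborel borel (\<lambda>x::'a. 0 + (1/t) *\<^sub>R x)) (K \<inter> ball 0 1)"
    using S1 by (subst nn_integral_cmult_indicator) auto
  also have "\<dots> = ennreal (\<bar>1/t\<bar>^DIM('a)) * emeasure lborel (K \<inter> ball 0 t)"
    using S1 pre by (subst emeasure_distr) auto
  finally have eq: "emeasure lborel (K \<inter> ball 0 1) = ennreal ((1/t)^DIM('a)) * emeasure lborel (K \<inter> ball 0 t)"
    using t by simp
  have "ennreal (t ^ DIM('a)) * emeasure lborel (K \<inter> ball 0 1)
      = ennreal (t ^ DIM('a) * (1/t)^DIM('a)) * emeasure lborel (K \<inter> ball 0 t)"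
    unfolding eq using t by (simp add: ennreal_mult mult.assoc)
  also have "t ^ DIM('a) * (1/t)^DIM('a) = 1" using t by (simp add: power_mult_distrib[symmetric])
  finally show ?thesis by simp
qed

lemma ftc_pow:
  assumes "0 \<le> a" "a \<le> 1" "n \<ge> 1"
  shows "(\<integral>\<^sup>+t. ennreal (real n * t^(n-1)) * indicator {a..1} t \<partial>lborel) = ennreal (1 - a^n)"
proof -
  have "(\<integral>\<^sup>+t. ennreal (real n * t^(n-1)) * indicator {a..1} t \<partial>lborel) = ennreal (1^n - a^n)"
    by (rule nn_integral_FTC_Icc) (use assms in \<open>auto intro!: derivative_eq_intros\<close>)
  then show ?thesis by simp
qed

lemma radial:
  fixes K :: "'a::euclidean_space set" and g :: "real \<Rightarrow> ennreal"
  assumes K: "K \<in> sets lborel" and cone: "\<And>z c. z \<in> K \<Longrightarrow> 0 < c \<Longrightarrow> c *\<^sub>R z \<in> K"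
    and g[measurable]: "g \<in> borel_measurable borel"
  shows "(\<integral>\<^sup>+z. g (norm z) * indicator (K \<inter> ball 0 1) z \<partial>lborel)
       = emeasure lborel (K \<inter> ball 0 1) * (\<integral>\<^sup>+t. g t * ennreal (real DIM('a) * t^(DIM('a)-1)) * indicator {0..1} t \<partial>lborel)"
proof -
  define S where "S = K \<inter> ball (0::'a) 1"
  define n where "n = DIM('a)"
  have n1: "n \<ge> 1" unfolding n_def by (simp add: DIM_positive Suc_leI)
  have S: "S \<in> sets lborel" using K unfolding S_def by simp
  have Sfin: "emeasure lborel S < \<infinity>"
    using emeasure_mono[of S "ball 0 1" lborel] emeasure_lborel_ball_finite[of "0::'a" 1]
    unfolding S_def by auto
  define m where "m = measure lborel S"
  have mS: "emeasure lborel S = ennreal m" unfolding m_def using Sfin by (simp add: emeasure_eq_ennreal_measure)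
  have m0: "m \<ge> 0" unfolding m_def by simp
  define h where "h t = ennreal m * (ennreal (real n * t^(n-1)) * indicator {0..1} t)" for t :: real
  have hm[measurable]: "h \<in> borel_measurable borel" unfolding h_def by simp
  have ballK: "emeasure lborel (K \<inter> ball 0 a) = ennreal (a^n * m)" if "0 \<le> a" for a
  proof (cases "a = 0")
    case True then show ?thesis using n1 by (simp add: power_0_left)
  next
    case False
    then have "0 < a" using that by simp
    then show ?thesis using cone_scale[OF K cone, of a] mS m0 that
      unfolding S_def n_def by (simp add: ennreal_mult)
  qed
  have cballK: "emeasure lborel (K \<inter> cball 0 a) = ennreal (a^n * m)" if "0 \<le> a" for a
  proof -
    have null: "K \<inter> sphere 0 a \<in> null_sets lborel"
    proof (rule null_sets_subset)
      from negligible_sphere[of "0::'a" a] show "sphere (0::'a) a \<in> null_sets lborel"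
        by (auto simp: null_sets_completion_iff negligible_iff_null_sets negligible_convex_frontier)
      show "K \<inter> sphere 0 a \<in> sets lborel" using K by simp
    qed auto
    have "K \<inter> cball 0 a = (K \<inter> ball 0 a) \<union> (K \<inter> sphere 0 a)" by auto
    then have "emeasure lborel (K \<inter> cball 0 a) = emeasure lborel (K \<inter> ball 0 a)"
      using null K by (simp add: emeasure_Un_null_set)
    then show ?thesis using ballK[OF that] by simp
  qed
  have D: "distr (density lborel (indicator S)) borel norm = density lborel h"
  proof (rule measure_eqI_lessThan)
    show "sets (distr (density lborel (indicator S)) borel norm) = sets borel" by simp
    show "sets (density lborel h) = sets borel" by simp
    have E: "emeasure (distr (density lborel (indicator S)) borel norm) {a<..} = emeasure lborel (S \<inter> {z. a < norm z})" for a
    proof -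
      have "open {z::'a. a < norm z}" by (intro open_Collect_less continuous_intros)
      then have o: "open (norm -` {a<..} :: 'a set)" by (simp add: vimage_def)
      have "emeasure (distr (density lborel (indicator S)) borel norm) {a<..} = emeasure (density lborel (indicator S)) (norm -` {a<..})"
        by (subst emeasure_distr) auto
      also have "\<dots> = emeasure lborel (S \<inter> norm -` {a<..})"
        using S o by (subst emeasure_restricted) auto
      finally show ?thesis by (simp add: vimage_def)
    qed
    show "emeasure (distr (density lborel (indicator S)) borel norm) {a<..} < \<infinity>" for a
      unfolding E using emeasure_mono[of "S \<inter> {z. a < norm z}" S lborel] S Sfin by auto
    show "emeasure (distr (density lborel (indicator S)) borel norm) {a<..} = emeasure (density lborel h) {a<..}" for a
    proof -
      have R: "emeasure (density lborel h) {a<..} = (\<integral>\<^sup>+t. h t * indicator {a<..} t \<partial>lborel)"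
        by (subst emeasure_density) auto
      consider "a < 0" | "0 \<le> a" "a < 1" | "1 \<le> a" by linarith
      then show ?thesis
      proof cases
        case 1
        have "S \<inter> {z. a < norm z} = S" using 1 by (auto simp: less_le_trans[OF 1])
        then have l: "emeasure lborel (S \<inter> {z. a < norm z}) = ennreal m" using mS by simp
        have "(\<integral>\<^sup>+t. h t * indicator {a<..} t \<partial>lborel) = (\<integral>\<^sup>+t. ennreal m * (ennreal (real n * t^(n-1)) * indicator {0..1} t) \<partial>lborel)"
          unfolding h_def using 1 by (intro nn_integral_cong) (auto split: split_indicator)
        also have "\<dots> = ennreal m * (\<integral>\<^sup>+t. ennreal (real n * t^(n-1)) * indicator {0..1} t \<partial>lborel)"
          by (rule nn_integral_cmult) simp
        also have "\<dots> = ennreal m" using ftc_pow[of 0 n] n1 by (simp add: power_0_left)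
        finally show ?thesis unfolding E R l by simp
      next
        case 2
        have "S \<inter> {z. a < norm z} = S - (K \<inter> cball 0 a)" unfolding S_def by auto
        moreover have "emeasure lborel (S - (K \<inter> cball 0 a)) = ennreal m - ennreal (a^n * m)"
          using emeasure_Diff[of lborel "K \<inter> cball 0 a" S] mS S K cballK[OF 2(1)] 2
            subset_ball[of a 1 "0::'a"] ball_subset_cball[of "0::'a" a] unfolding S_def
          by (auto simp: subset_iff)
        ultimately have l: "emeasure lborel (S \<inter> {z. a < norm z}) = ennreal (m * (1 - a^n))"
          using m0 2 by (simp add: ennreal_minus algebra_simps power_le_one)
        have "(\<integral>\<^sup>+t. h t * indicator {a<..} t \<partial>lborel) = (\<integral>\<^sup>+t. ennreal m * (ennreal (real n * t^(n-1)) * indicator {a..1} t) \<partial>lborel)"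
          unfolding h_def using 2
          by (intro nn_integral_cong_AE, use AE_lborel_singleton[of a] in eventually_elim) (auto split: split_indicator)
        also have "\<dots> = ennreal m * (\<integral>\<^sup>+t. ennreal (real n * t^(n-1)) * indicator {a..1} t \<partial>lborel)"
          by (rule nn_integral_cmult) simp
        also have "\<dots> = ennreal (m * (1 - a^n))" using ftc_pow[of a n] n1 2 m0 power_le_one[of a n] by (simp add: ennreal_mult)
        finally show ?thesis unfolding E R l by simp
      next
        case 3
        have "S \<inter> {z. a < norm z} = {}" using 3 unfolding S_def by auto
        moreover have "(\<integral>\<^sup>+t. h t * indicator {a<..} t \<partial>lborel) = (\<integral>\<^sup>+(t::real). 0 \<partial>lborel)"
          unfolding h_def using 3 by (intro nn_integral_cong) (auto split: split_indicator)
        ultimately show ?thesis unfolding E R by simp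
      qed
    qed
  qed
  have "(\<integral>\<^sup>+z. g (norm z) * indicator S z \<partial>lborel) = (\<integral>\<^sup>+z. g (norm z) \<partial>density lborel (indicator S))"
    using S g by (subst nn_integral_density) (auto simp: mult.commute)
  also have "\<dots> = (\<integral>\<^sup>+t. g t \<partial>distr (density lborel (indicator S)) borel norm)"
    using g by (subst nn_integral_distr) auto
  also have "\<dots> = (\<integral>\<^sup>+t. g t \<partial>density lborel h)" unfolding D ..
  also have "\<dots> = (\<integral>\<^sup>+t. h t * g t \<partial>lborel)" using g by (subst nn_integral_density) auto
  also have "\<dots> = (\<integral>\<^sup>+t. ennreal m * (g t * ennreal (real n * t^(n-1)) * indicator {0..1} t) \<partial>lborel)"
    unfolding h_def by (intro nn_integral_cong) (simp add: ac_simps)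
  also have "\<dots> = ennreal m * (\<integral>\<^sup>+t. g t * ennreal (real n * t^(n-1)) * indicator {0..1} t \<partial>lborel)"
    using g by (subst nn_integral_cmult) auto
  finally show ?thesis unfolding mS[symmetric] S_def n_def .
qed

lemma sin_half: fixes r :: real assumes "0 < r" "r < 1" shows "r / 2 \<le> sin r"
proof -
  obtain z where z: "0 < z" "z < r" "sin r - sin 0 = (r - 0) * cos z"
    using MVT2[of 0 r sin cos] assms by (auto intro: DERIV_sin)
  have "pi / 3 > 1" using pi_gt3 by simp
  then have "cos (pi/3) < cos z" using z assms by (intro cos_monotone_0_pi) auto
  then have "1/2 < cos z" by (simp add: cos_60)
  then show ?thesis using z assms by (simp add: mult_left_mono)
qed

lemma cos_pos_r: fixes r :: real assumes "0 < r" "r < 1" shows "0 < cos r"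
  using assms pi_gt3 by (intro cos_gt_zero_pi) auto

lemma norm_sub_sq:
  fixes x z :: "'a::euclidean_space"
  assumes "norm x = 1"
  shows "(norm (z - c *\<^sub>R x))\<^sup>2 = (norm z)\<^sup>2 - 2 * c * inner x z + c\<^sup>2"
proof -
  have "inner x x = 1" using assms by (simp add: norm_eq_1[symmetric])
  have "(norm (z - c *\<^sub>R x))\<^sup>2 = inner (z - c *\<^sub>R x) (z - c *\<^sub>R x)" by (rule power2_norm_eq_inner)
  also have "\<dots> = inner z z - 2 * c * inner x z + c\<^sup>2 * inner x x"
    by (simp add: inner_diff_left inner_diff_right inner_commute algebra_simps power2_eq_square)
  finally show ?thesis using \<open>inner x x = 1\<close> by (simp add: power2_norm_eq_inner)
qed

lemma cone_upper:
  fixes x :: "'a::euclidean_space"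
  assumes x: "norm x = 1" and r: "0 < r" "r < 1"
  shows "emeasure lborel ({z. cos r * norm z < inner x z} \<inter> ball 0 1)
     \<le> ennreal (5/2 * 2^DIM('a) * unit_ball_vol (real DIM('a)) * r^(DIM('a)-1))"
proof -
  define n where "n = DIM('a)"
  define U where "U = unit_ball_vol (real DIM('a))"
  have U0: "0 \<le> U" unfolding U_def by (simp add: unit_ball_vol_nonneg)
  have n1: "n \<ge> 1" unfolding n_def by (simp add: DIM_positive Suc_leI)
  define N where "N = nat \<lfloor>1/r + 1/2\<rfloor>"
  define A where "A k = ball ((real k * r) *\<^sub>R x) (2*r)" for k::nat
  have cr: "0 < cos r" using cos_pos_r r .
  have sub: "{z. cos r * norm z < inner x z} \<inter> ball 0 1 \<subseteq> (\<Union>k\<in>{0..N}. A k)"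
  proof
    fix z assume "z \<in> {z. cos r * norm z < inner x z} \<inter> ball 0 1"
    then have zK: "cos r * norm z < inner x z" and z1: "norm z < 1" by auto
    define s where "s = inner x z"
    have s0: "0 \<le> s" using zK cr unfolding s_def by (smt (verit) mult_nonneg_nonneg norm_ge_zero)
    have s1: "s \<le> norm z" unfolding s_def using norm_cauchy_schwarz[of x z] x by simp
    define k where "k = nat \<lfloor>s/r + 1/2\<rfloor>"
    have kr: "real k = of_int \<lfloor>s/r + 1/2\<rfloor>" unfolding k_def using s0 r by simp
    have k1: "s/r + 1/2 - 1 < real k" "real k \<le> s/r + 1/2" unfolding kr by linarith+
    have k2: "s - r/2 < real k * r" "real k * r \<le> s + r/2"
      using k1 r by (simp_all add: field_simps)
    have kN: "k \<le> N" unfolding k_def N_def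
      using s1 z1 r by (intro nat_mono floor_mono) (simp add: divide_right_mono)
    have "(cos r * norm z)\<^sup>2 \<le> s\<^sup>2" using zK cr unfolding s_def
      by (intro power_mono) auto
    then have "(norm z)\<^sup>2 - s\<^sup>2 \<le> (norm z)\<^sup>2 * (1 - (cos r)\<^sup>2)" by (simp add: algebra_simps power_mult_distrib)
    also have "\<dots> = (norm z)\<^sup>2 * (sin r)\<^sup>2" by (simp add: sin_squared_eq)
    also have "\<dots> \<le> 1 * r\<^sup>2"
      using z1 sin_x_le_x[of r] r sin_gt_zero[of r] pi_gt3
      by (intro mult_mono power_mono) (auto simp: power_le_one)
    finally have perp: "(norm z)\<^sup>2 - s\<^sup>2 \<le> r\<^sup>2" by simp
    have "(norm (z - (real k * r) *\<^sub>R x))\<^sup>2 = ((norm z)\<^sup>2 - s\<^sup>2) + (s - real k * r)\<^sup>2"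
      unfolding norm_sub_sq[OF x] s_def by (simp add: algebra_simps power2_eq_square)
    also have "(s - real k * r)\<^sup>2 \<le> (r/2)\<^sup>2"
      using k2 r abs_le_square_iff[of "s - real k * r" "r/2"] by linarith
    finally have "(norm (z - (real k * r) *\<^sub>R x))\<^sup>2 < (2*r)\<^sup>2" using perp r
      by (simp add: power2_eq_square) (use mult_pos_pos[OF r(1) r(1)] in linarith)
    note sq = this
    have "norm (z - (real k * r) *\<^sub>R x) < 2*r" using power2_less_imp_less[OF sq] r by simp
    then have "dist z ((real k * r) *\<^sub>R x) < 2*r" by (simp only: dist_norm)
    then have "z \<in> A k" unfolding A_def by (simp add: dist_commute)
    then show "z \<in> (\<Union>k\<in>{0..N}. A k)" using kN by auto
  qed
  have "emeasure lborel ({z. cos r * norm z < inner x z} \<inter> ball 0 1) \<le> emeasure lborel (\<Union>k\<in>{0..N}. A k)"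
    using sub by (intro emeasure_mono) (auto simp: A_def)
  also have "\<dots> \<le> (\<Sum>k\<in>{0..N}. emeasure lborel (A k))"
    by (intro emeasure_subadditive_finite) (auto simp: A_def)
  also have "\<dots> = (\<Sum>k\<in>{0..N}. ennreal (U * (2*r)^n))"
    unfolding A_def U_def n_def using r by (simp add: emeasure_ball)
  also have "\<dots> = ennreal (real (N+1) * (U * (2*r)^n))"
    using U0 r by (simp add: ennreal_of_nat_eq_real_of_nat ennreal_mult)
  also have "\<dots> \<le> ennreal (5/2 * 2^n * U * r^(n-1))"
  proof (intro ennreal_leI)
    have fl: "0 \<le> \<lfloor>1/r + 1/2\<rfloor>" using r by simp
    then have "real N = of_int \<lfloor>1/r + 1/2\<rfloor>" unfolding N_def by simp
    then have "real N \<le> 1/r + 1/2" using of_int_floor_le[of "1/r + 1/2"] by linarith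
    then have "real (N+1) * r \<le> 5/2" using r by (simp add: field_simps)
    have rn: "r^n = r * r^(n-1)" using n1 by (metis Suc_diff_1 less_le_trans zero_less_one power_Suc)
    have "real (N+1) * (U * (2*r)^n) = (real (N+1) * r) * (2^n * U * r^(n-1))"
      by (simp add: power_mult_distrib rn)
    also have "\<dots> \<le> (5/2) * (2^n * U * r^(n-1))"
      using \<open>real (N+1) * r \<le> 5/2\<close> U0 r by (intro mult_right_mono) auto
    finally show "real (N+1) * (U * (2*r)^n) \<le> 5/2 * 2^n * U * r^(n-1)" by simp
  qed
  finally show ?thesis unfolding n_def U_def .
qed

lemma cone_lower:
  fixes x :: "'a::euclidean_space"
  assumes x: "norm x = 1" and r: "0 < r" "r < 1"
  shows "ennreal (unit_ball_vol (real DIM('a)) * r^(DIM('a)-1) / (2 * 8^DIM('a)))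
     \<le> emeasure lborel ({z. cos r * norm z < inner x z} \<inter> ball 0 1)"
proof -
  define n where "n = DIM('a)"
  define U where "U = unit_ball_vol (real DIM('a))"
  have U0: "0 \<le> U" unfolding U_def by (simp add: unit_ball_vol_nonneg)
  have n1: "n \<ge> 1" unfolding n_def by (simp add: DIM_positive Suc_leI)
  have xx: "inner x x = 1" using x by (simp add: norm_eq_1[symmetric])
  define N where "N = nat \<lfloor>1/r\<rfloor>"
  have fl: "1 \<le> \<lfloor>1/r\<rfloor>" using r by (simp add: le_floor_iff)
  then have RN: "real N = of_int \<lfloor>1/r\<rfloor>" unfolding N_def by (intro of_nat_nat) linarith
  have N1: "1 \<le> real N" using fl RN by linarith
  have NB: "real N \<le> 1/r" using RN of_int_floor_le[of "1/r"] by linarith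
  have NA: "1/r < real N + 1" using RN real_of_int_floor_add_one_gt[of "1/r"] by linarith
  have Nr: "1/2 \<le> real N * r"
  proof -
    have "1 < (real N + 1) * r" using NA r by (simp add: field_simps)
    moreover have "r * 1 \<le> r * real N" using N1 r by (intro mult_left_mono) auto
    ultimately show ?thesis by (simp add: algebra_simps)
  qed
  define c where "c k = 1/2 + real k * r / 4" for k :: nat
  define B where "B k = ball (c k *\<^sub>R x) (r/8)" for k :: nat
  have cr: "0 < cos r" using cos_pos_r r .
  have sr: "r/2 \<le> sin r" using sin_half r .
  have sub: "(\<Union>k\<in>{..<N}. B k) \<subseteq> {z. cos r * norm z < inner x z} \<inter> ball 0 1"
  proof
    fix y assume "y \<in> (\<Union>k\<in>{..<N}. B k)"
    then obtain k where k: "k < N" "y \<in> B k" by auto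
    have "real k \<le> real N - 1" using k by linarith
    then have "real k * r \<le> (1/r - 1) * r" using NB r by (intro mult_right_mono) auto
    also have "(1/r - 1) * r = 1 - r" using r by (simp add: field_simps)
    finally have "real k * r \<le> 1 - r" .
    then have ck1: "c k \<le> 3/4 - r/4" unfolding c_def by linarith
    have ck0: "1/2 \<le> c k" unfolding c_def using r by simp
    define w where "w = y - c k *\<^sub>R x"
    have "dist y (c k *\<^sub>R x) < r/8" using k(2) unfolding B_def by (simp add: dist_commute)
    then have w: "norm w < r/8" unfolding w_def by (simp only: dist_norm)
    have yw: "y = c k *\<^sub>R x + w" unfolding w_def by simp
    have "norm y \<le> norm (c k *\<^sub>R x) + norm w" unfolding yw by (rule norm_triangle_ineq)
    also have "norm (c k *\<^sub>R x) = c k" using x ck0 by simp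
    finally have y1: "norm y < 1" using w ck1 r by linarith
    define s where "s = inner x y"
    have sw: "s = c k + inner x w" unfolding s_def yw using xx by (simp add: inner_add_right)
    have "\<bar>inner x w\<bar> \<le> norm w" using Cauchy_Schwarz_ineq2[of x w] x by simp
    then have s38: "3/8 < s" using sw w ck0 r by linarith
    have sy: "s \<le> norm y" unfolding s_def using norm_cauchy_schwarz[of x y] x by simp
    have "(norm (y - c k *\<^sub>R x))\<^sup>2 = ((norm y)\<^sup>2 - s\<^sup>2) + (s - c k)\<^sup>2"
      unfolding norm_sub_sq[OF x] s_def by (simp add: algebra_simps power2_eq_square)
    then have "(norm y)\<^sup>2 - s\<^sup>2 \<le> (norm w)\<^sup>2" unfolding w_def by simp
    also have "\<dots> \<le> (r/8)\<^sup>2" using w by (intro power_mono) auto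
    finally have perp: "(norm y)\<^sup>2 - s\<^sup>2 \<le> r\<^sup>2 / 64" by (simp add: power_divide)
    have "(r/2)\<^sup>2 * (3/8)\<^sup>2 \<le> (sin r)\<^sup>2 * (norm y)\<^sup>2"
      using sr s38 sy r by (intro mult_mono power_mono) auto
    then have big: "9 * r\<^sup>2 / 256 \<le> (sin r)\<^sup>2 * (norm y)\<^sup>2" by (simp add: power_divide)
    have "(cos r * norm y)\<^sup>2 = (norm y)\<^sup>2 - (sin r)\<^sup>2 * (norm y)\<^sup>2"
      by (simp add: power_mult_distrib cos_squared_eq algebra_simps)
    also have "\<dots> < s\<^sup>2" using perp big r by (simp add: power2_eq_square) (use mult_pos_pos[OF r(1) r(1)] in linarith)
    finally have sq2: "(cos r * norm y)\<^sup>2 < s\<^sup>2" .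
    have "cos r * norm y < s" using power2_less_imp_less[OF sq2] s38 by simp
    then show "y \<in> {z. cos r * norm z < inner x z} \<inter> ball 0 1" using y1 unfolding s_def by simp
  qed
  have disj: "disjoint_family_on B {..<N}"
    unfolding disjoint_family_on_def
  proof (intro ballI impI)
    fix j k assume jk: "j \<in> {..<N}" "k \<in> {..<N}" "j \<noteq> k"
    show "B j \<inter> B k = {}"
    proof (rule ccontr)
      assume "B j \<inter> B k \<noteq> {}"
      then obtain y where y: "y \<in> B j" "y \<in> B k" by auto
      have "dist (c j *\<^sub>R x) (c k *\<^sub>R x) \<le> dist (c j *\<^sub>R x) y + dist y (c k *\<^sub>R x)" by (rule dist_triangle)
      also have "\<dots> < r/4" using y unfolding B_def by (simp add: dist_commute)
      finally have lt: "dist (c j *\<^sub>R x) (c k *\<^sub>R x) < r/4" .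
      have "dist (c j *\<^sub>R x) (c k *\<^sub>R x) = \<bar>c j - c k\<bar>"
        using x by (simp add: dist_norm scaleR_diff_left[symmetric])
      also have "c j - c k = (real j - real k) * (r/4)" unfolding c_def by (simp add: algebra_simps)
      also have "\<bar>(real j - real k) * (r/4)\<bar> = \<bar>real j - real k\<bar> * (r/4)" using r by (simp add: abs_mult)
      finally have "\<bar>real j - real k\<bar> * (r/4) < 1 * (r/4)" using lt by simp
      then have "\<bar>real j - real k\<bar> < 1" using r by (simp only: mult_less_cancel_right)
      then show False using jk(3) by linarith
    qed
  qed
  have "emeasure lborel (\<Union>k\<in>{..<N}. B k) = (\<Sum>k\<in>{..<N}. emeasure lborel (B k))"
    using disj by (intro sum_emeasure[symmetric]) (auto simp: B_def[abs_def])
  also have "\<dots> = (\<Sum>k\<in>{..<N}. ennreal (U * (r/8)^n))"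
    unfolding B_def U_def n_def using r by (simp add: emeasure_ball)
  also have "\<dots> = ennreal (real N * (U * (r/8)^n))"
    using U0 r by (simp add: ennreal_of_nat_eq_real_of_nat ennreal_mult)
  finally have eqU: "emeasure lborel (\<Union>k\<in>{..<N}. B k) = ennreal (real N * (U * (r/8)^n))" .
  have rn: "r^n = r * r^(n-1)" using n1 by (metis Suc_diff_1 less_le_trans zero_less_one power_Suc)
  have "U * r^(n-1) / (2 * 8^n) = (1/2) * (U * r^(n-1) / 8^n)" by simp
  also have "\<dots> \<le> (real N * r) * (U * r^(n-1) / 8^n)"
    using Nr U0 r by (intro mult_right_mono) auto
  also have "\<dots> = real N * (U * (r/8)^n)" by (simp add: power_divide rn)
  finally have "ennreal (U * r^(n-1) / (2 * 8^n)) \<le> emeasure lborel (\<Union>k\<in>{..<N}. B k)"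
    unfolding eqU by (rule ennreal_leI)
  also have "\<dots> \<le> emeasure lborel ({z. cos r * norm z < inner x z} \<inter> ball 0 1)"
    using sub by (intro emeasure_mono) auto
  finally show ?thesis unfolding U_def n_def .
qed

lemma pow_le_t: fixes t :: real assumes "0 \<le> t" "t \<le> 1" "n \<ge> 2" shows "t^(n-1) \<le> t"
proof -
  obtain m where m: "n = m + 2" using assms(3) le_Suc_ex[of 2 n] by (auto simp: add.commute)
  have "t^(n-1) = t * t^(n-2)" unfolding m by simp
  also have "\<dots> \<le> t * 1" using assms by (intro mult_left_mono power_le_one) auto
  finally show ?thesis by simp
qed

lemma pow_ge_t: fixes t :: real assumes "1/2 \<le> t" "n \<ge> 2" shows "(1/2)^(n-2) * t \<le> t^(n-1)"
proof -
  obtain m where m: "n = m + 2" using assms(2) le_Suc_ex[of 2 n] by (auto simp: add.commute)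
  have "t^(n-1) = t^(n-2) * t" unfolding m by simp
  moreover have "(1/2)^(n-2) \<le> t^(n-2)" using assms by (intro power_mono) auto
  ultimately show ?thesis using assms by (simp add: mult_right_mono)
qed

lemma J_bounds:
  fixes r \<alpha> :: real and n :: nat
  assumes r: "0 < r" "r < 1" and al: "\<alpha> > -1" and n: "n \<ge> 2"
  defines "J \<equiv> \<integral>\<^sup>+t. ennreal ((1 - t\<^sup>2) powr \<alpha> * indicator {1-r<..} t) * ennreal (real n * t^(n-1)) * indicator {0..1} t \<partial>lborel"
  shows "J \<le> ennreal (real n * ((r*(2-r)) powr (\<alpha>+1) / (2*(\<alpha>+1))))"
    and "ennreal (real n * (1/2)^(n-2) * ((r/2*(2-r/2)) powr (\<alpha>+1) / (2*(\<alpha>+1)))) \<le> J"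
proof -
  define F where "F t = (1 - t\<^sup>2) powr \<alpha> * indicator {1-r<..} t * (real n * t^(n-1)) * indicator {0..1} t" for t :: real
  have F0: "0 \<le> F t" for t unfolding F_def by (auto split: split_indicator)
  have JF: "J = (\<integral>\<^sup>+t. ennreal (F t) \<partial>lborel)"
    unfolding J_def F_def
    by (intro nn_integral_cong) (auto split: split_indicator simp: ennreal_mult[symmetric])
  show "J \<le> ennreal (real n * ((r*(2-r)) powr (\<alpha>+1) / (2*(\<alpha>+1))))"
  proof -
    have "J \<le> (\<integral>\<^sup>+t. ennreal (real n * ((1 - t\<^sup>2) powr \<alpha> * t * indicator {1-r<..<1} t)) \<partial>lborel)"
      unfolding JF
    proof (intro nn_integral_mono ennreal_leI)
      fix t :: real
      show "F t \<le> real n * ((1 - t\<^sup>2) powr \<alpha> * t * indicator {1-r<..<1} t)"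
      proof (cases "t \<in> {1-r<..<1}")
        case True
        then have t: "0 \<le> t" "t \<le> 1" "1 - r < t" using r by auto
        have "(1 - t\<^sup>2) powr \<alpha> * (real n * t^(n-1)) \<le> (1 - t\<^sup>2) powr \<alpha> * (real n * t)"
          using pow_le_t[OF t(1,2) n] by (intro mult_left_mono) auto
        then show ?thesis using True t unfolding F_def by (simp add: algebra_simps)
      next
        case False
        then have "t \<le> 1 - r \<or> t = 1 \<or> 1 < t" by auto
        then have "F t = 0" unfolding F_def by auto
        then show ?thesis using False by simp
      qed
    qed
    also have "\<dots> = (\<integral>\<^sup>+t. ennreal (real n) * (ennreal ((1 - t\<^sup>2) powr \<alpha> * t) * indicator {1-r<..<1} t) \<partial>lborel)"
      using r by (intro nn_integral_cong) (auto split: split_indicator simp: ennreal_mult)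
    also have "\<dots> = ennreal (real n) * (\<integral>\<^sup>+t. ennreal ((1 - t\<^sup>2) powr \<alpha> * t) * indicator {1-r<..<1} t \<partial>lborel)"
      by (rule nn_integral_cmult) simp
    also have "\<dots> = ennreal (real n) * ennreal ((1 - (1-r)\<^sup>2) powr (\<alpha> + 1) / (2 * (\<alpha> + 1)))"
      using oneD[of "1-r" \<alpha>] r al by simp
    also have "1 - (1-r)\<^sup>2 = r*(2-r)" by (simp add: power2_eq_square algebra_simps)
    also have "ennreal (real n) * ennreal ((r*(2-r)) powr (\<alpha> + 1) / (2 * (\<alpha> + 1))) = ennreal (real n * ((r*(2-r)) powr (\<alpha>+1) / (2*(\<alpha>+1))))"
      by (rule ennreal_mult'[symmetric]) simp
    finally show ?thesis .
  qed
  show "ennreal (real n * (1/2)^(n-2) * ((r/2*(2-r/2)) powr (\<alpha>+1) / (2*(\<alpha>+1)))) \<le> J"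
  proof -
    have "ennreal (real n * (1/2)^(n-2) * ((r/2*(2-r/2)) powr (\<alpha>+1) / (2*(\<alpha>+1))))
        = ennreal (real n * (1/2)^(n-2)) * ennreal ((1 - (1-r/2)\<^sup>2) powr (\<alpha> + 1) / (2 * (\<alpha> + 1)))"
    proof -
      have e1: "1 - (1-r/2)\<^sup>2 = r/2*(2-r/2)" by (simp add: power2_eq_square algebra_simps)
      show ?thesis unfolding e1 by (rule ennreal_mult') simp
    qed
    also have "\<dots> = ennreal (real n * (1/2)^(n-2)) * (\<integral>\<^sup>+t. ennreal ((1 - t\<^sup>2) powr \<alpha> * t) * indicator {1-r/2<..<1} t \<partial>lborel)"
      by (subst oneD[of "1-r/2" \<alpha>]) (use r al in auto)
    also have "\<dots> = (\<integral>\<^sup>+t. ennreal (real n * (1/2)^(n-2)) * (ennreal ((1 - t\<^sup>2) powr \<alpha> * t) * indicator {1-r/2<..<1} t) \<partial>lborel)"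
      by (rule nn_integral_cmult[symmetric]) simp
    also have "\<dots> = (\<integral>\<^sup>+t. ennreal (real n * (1/2)^(n-2) * ((1 - t\<^sup>2) powr \<alpha> * t * indicator {1-r/2<..<1} t)) \<partial>lborel)"
      using r by (intro nn_integral_cong) (auto split: split_indicator simp: ennreal_mult)
    also have "\<dots> \<le> J"
      unfolding JF
    proof (intro nn_integral_mono ennreal_leI)
      fix t :: real
      show "real n * (1/2)^(n-2) * ((1 - t\<^sup>2) powr \<alpha> * t * indicator {1-r/2<..<1} t) \<le> F t"
      proof (cases "t \<in> {1-r/2<..<1}")
        case True
        then have t: "1/2 \<le> t" "t \<le> 1" "1 - r < t" using r by auto
        have "(1 - t\<^sup>2) powr \<alpha> * (real n * ((1/2)^(n-2) * t)) \<le> (1 - t\<^sup>2) powr \<alpha> * (real n * t^(n-1))"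
          using pow_ge_t[OF t(1) n] by (intro mult_left_mono) auto
        then show ?thesis using True t unfolding F_def by (simp add: algebra_simps)
      next
        case False
        then show ?thesis using F0[of t] by simp
      qed
    qed
    finally show ?thesis .
  qed
qed

lemma arccos_lt_iff:
  fixes c r :: real
  assumes "-1 \<le> c" "c \<le> 1" "0 < r" "r \<le> pi"
  shows "arccos c < r \<longleftrightarrow> cos r < c"
  using cos_mono_less_eq[of r "arccos c"] arccos_bounded[of c] assms by auto

lemma rho_iff:
  fixes x z :: "'a::euclidean_space"
  assumes x: "norm x = 1" and r: "0 < r" "r < 1" and z0: "z \<noteq> 0"
  shows "rho x (z /\<^sub>R norm z) < r \<longleftrightarrow> cos r * norm z < inner x z"
proof -
  have rpi: "r \<le> pi" using r pi_gt3 by linarith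
  have nz: "0 < norm z" using z0 by simp
  have i: "inner x (z /\<^sub>R norm z) = inner x z / norm z" by (simp add: divide_inverse_commute)
  have cs: "\<bar>inner x z\<bar> \<le> norm z" using Cauchy_Schwarz_ineq2[of x z] x by simp
  then have b: "-1 \<le> inner x z / norm z" "inner x z / norm z \<le> 1" using nz
    by (auto simp: divide_le_eq le_divide_eq abs_le_iff)
  have "rho x (z /\<^sub>R norm z) < r \<longleftrightarrow> cos r < inner x z / norm z"
    unfolding rho_def i using arccos_lt_iff[OF b r(1) rpi] .
  also have "\<dots> \<longleftrightarrow> cos r * norm z < inner x z" using nz by (simp add: less_divide_eq)
  finally show ?thesis .
qed

lemma Bhat_eq:
  fixes x :: "'a::euclidean_space"
  assumes x: "norm x = 1" and r: "0 < r" "r < 1"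
  shows "Bhat x r = ({z. cos r * norm z < inner x z} \<inter> ball 0 1) \<inter> {z. 1 - r < norm z}"
proof (intro equalityI subsetI)
  fix z assume "z \<in> Bhat x r"
  then show "z \<in> ({z. cos r * norm z < inner x z} \<inter> ball 0 1) \<inter> {z. 1 - r < norm z}"
    unfolding Bhat_def using rho_iff[OF x r] by auto
next
  fix z assume z: "z \<in> ({z. cos r * norm z < inner x z} \<inter> ball 0 1) \<inter> {z. 1 - r < norm z}"
  then have "z \<noteq> 0" by auto
  then show "z \<in> Bhat x r" using z rho_iff[OF x r] unfolding Bhat_def by auto
qed

theorem lemma2p2:
  fixes dummy :: "real ^ 'n"
  assumes "CARD('n) \<ge> 3"
  shows "\<exists>C2>0. \<forall>\<alpha>>-1. \<exists>C1>0. \<forall>r (x::real^'n). 0 < r \<and> r < 1 \<and> norm x = 1 \<longrightarrow>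
     C1 * (c_alpha \<alpha> TYPE(real^'n) / (\<alpha> + 1)) * r powr (real CARD('n) + \<alpha>) * (2 - r) powr (\<alpha> + 1)
       \<le> nu_alpha \<alpha> (Bhat x r)
   \<and> nu_alpha \<alpha> (Bhat x r)
       \<le> C2 * (c_alpha \<alpha> TYPE(real^'n) / (\<alpha> + 1)) * r powr (real CARD('n) + \<alpha>) * (2 - r) powr (\<alpha> + 1)"
proof -
  define n where "n = CARD('n)"
  have nD: "DIM(real^'n) = n" unfolding n_def by simp
  have n2: "n \<ge> 2" "n \<ge> 1" using assms unfolding n_def by auto
  define V where "V = measure lborel (ball (0::real^'n) 1)"
  have V: "V = unit_ball_vol (real n)" unfolding V_def using content_ball[of 1 "0::real^'n"] nD by simp
  have V0: "0 < V" unfolding V by simp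
  define C2 :: real where "C2 = 5/4 * 2^n * real n"
  have C2: "C2 > 0" unfolding C2_def using n2 by simp
  show ?thesis
  proof (rule exI[of _ C2], intro conjI C2 allI impI)
    fix \<alpha> :: real assume al: "\<alpha> > -1"
    define C1 :: real where "C1 = real n * (1/2)^(n-2) * (1/2) powr (\<alpha>+1) / (4 * 8^n)"
    have C1: "C1 > 0" unfolding C1_def using n2 by simp
    show "\<exists>C1>0. \<forall>r (x::real^'n). 0 < r \<and> r < 1 \<and> norm x = 1 \<longrightarrow>
     C1 * (c_alpha \<alpha> TYPE(real^'n) / (\<alpha> + 1)) * r powr (real CARD('n) + \<alpha>) * (2 - r) powr (\<alpha> + 1)
       \<le> nu_alpha \<alpha> (Bhat x r)
   \<and> nu_alpha \<alpha> (Bhat x r)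
       \<le> C2 * (c_alpha \<alpha> TYPE(real^'n) / (\<alpha> + 1)) * r powr (real CARD('n) + \<alpha>) * (2 - r) powr (\<alpha> + 1)"
    proof (rule exI[of _ C1], intro conjI C1 allI impI)
      fix r :: real and x :: "real^'n"
      assume rx: "0 < r \<and> r < 1 \<and> norm x = 1"
      then have r: "0 < r" "r < 1" and x: "norm x = 1" by auto
      define c where "c = c_alpha \<alpha> TYPE(real^'n)"
      have c0: "0 \<le> c" unfolding c_def c_alpha_def by simp
      define K where "K = {z::real^'n. cos r * norm z < inner x z}"
      have Kopen: "open K" unfolding K_def by (intro open_Collect_less continuous_intros)
      then have Ks: "K \<in> sets lborel" by simp
      have cone: "c' *\<^sub>R z \<in> K" if "z \<in> K" "0 < c'" for z c'
        using that unfolding K_def by (simp add: mult.left_commute[of "cos r"])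
      define g where "g t = ennreal ((1 - t\<^sup>2) powr \<alpha> * indicator {1-r<..} t)" for t :: real
      have gm: "g \<in> borel_measurable borel" unfolding g_def by measurable
      define J where "J = (\<integral>\<^sup>+t. ennreal ((1 - t\<^sup>2) powr \<alpha> * indicator {1-r<..} t) * ennreal (real n * t^(n-1)) * indicator {0..1} t \<partial>lborel)"
      have I: "(\<integral>\<^sup>+z\<in>Bhat x r \<inter> ball 0 1. ennreal (weight \<alpha> z) \<partial>lborel) = emeasure lborel (K \<inter> ball 0 1) * J"
      proof -
        have "(\<integral>\<^sup>+z\<in>Bhat x r \<inter> ball 0 1. ennreal (weight \<alpha> z) \<partial>lborel) = (\<integral>\<^sup>+z. g (norm z) * indicator (K \<inter> ball 0 1) z \<partial>lborel)"
          unfolding Bhat_eq[OF x r] K_def[symmetric] g_def weight_def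
          by (intro nn_integral_cong) (auto split: split_indicator)
        also have "\<dots> = emeasure lborel (K \<inter> ball 0 1) * (\<integral>\<^sup>+t. g t * ennreal (real DIM(real^'n) * t^(DIM(real^'n)-1)) * indicator {0..1} t \<partial>lborel)"
          by (rule radial[OF Ks cone gm])
        also have "\<dots> = emeasure lborel (K \<inter> ball 0 1) * J"
          unfolding J_def g_def nD ..
        finally show ?thesis .
      qed
      define m where "m = measure lborel (K \<inter> ball 0 1)"
      have mfin: "emeasure lborel (K \<inter> ball 0 1) < \<infinity>"
        using emeasure_mono[of "K \<inter> ball 0 1" "ball 0 1" lborel] emeasure_lborel_ball_finite[of "0::real^'n" 1]
        by auto
      have mE: "emeasure lborel (K \<inter> ball 0 1) = ennreal m" unfolding m_def using mfin
        by (simp add: emeasure_eq_ennreal_measure)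
      have m0: "0 \<le> m" unfolding m_def by simp
      have mU: "m \<le> 5/2 * 2^n * V * r^(n-1)"
      proof -
        have "ennreal m \<le> ennreal (5/2 * 2^n * V * r^(n-1))"
          using cone_upper[OF x r] mE unfolding K_def[symmetric] V nD by simp
        moreover have "0 \<le> 5/2 * 2^n * V * r^(n-1)" using V0 r by simp
        ultimately show ?thesis by simp
      qed
      have mL: "V * r^(n-1) / (2 * 8^n) \<le> m"
        using cone_lower[OF x r] mE m0 unfolding K_def[symmetric] V nD
        by (simp add: ennreal_le_iff)
      have JU: "J \<le> ennreal (real n * ((r*(2-r)) powr (\<alpha>+1) / (2*(\<alpha>+1))))"
        unfolding J_def by (rule J_bounds(1)[OF r al n2(1)])
      have JL: "ennreal (real n * (1/2)^(n-2) * ((r/2*(2-r/2)) powr (\<alpha>+1) / (2*(\<alpha>+1)))) \<le> J"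
        unfolding J_def by (rule J_bounds(2)[OF r al n2(1)])
      define j where "j = enn2real J"
      have Jfin: "J < top" using JU by (simp add: le_less_trans)
      have jJ: "J = ennreal j" unfolding j_def using Jfin by simp
      have j0: "0 \<le> j" unfolding j_def by simp
      have jU: "j \<le> real n * ((r*(2-r)) powr (\<alpha>+1) / (2*(\<alpha>+1)))"
        using JU jJ al by (simp add: ennreal_le_iff)
      have jL: "real n * (1/2)^(n-2) * ((r/2*(2-r/2)) powr (\<alpha>+1) / (2*(\<alpha>+1))) \<le> j"
        using JL jJ j0 by (simp add: ennreal_le_iff)
      have nu: "nu_alpha \<alpha> (Bhat x r) = c / V * (m * j)"
      proof -
        have "Bhat x r \<inter> ball 0 1 = Bhat x r \<inter> ball 0 1" ..
        show ?thesis unfolding nu_alpha_def c_def[symmetric] V_def[symmetric] I mE jJ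
          using m0 j0 by (simp add: ennreal_mult[symmetric])
      qed
      have a1: "0 < \<alpha> + 1" using al by simp
      define Q where "Q = r^(n-1) * (r*(2-r)) powr (\<alpha>+1) / (\<alpha>+1)"
      have e1: "r powr (real n + \<alpha>) = r^(n-1) * r powr (\<alpha>+1)"
      proof -
        have rn1: "real (n-1) = real n - 1" using n2 by (simp add: of_nat_diff)
        have "r^(n-1) * r powr (\<alpha>+1) = r powr (real (n-1)) * r powr (\<alpha>+1)" using r by (simp only: powr_realpow)
        also have "\<dots> = r powr (real (n-1) + (\<alpha>+1))" by (rule powr_add[symmetric])
        also have "real (n-1) + (\<alpha>+1) = real n + \<alpha>" using rn1 by simp
        finally show ?thesis by simp
      qed
      have e2: "(r*(2-r)) powr (\<alpha>+1) = r powr (\<alpha>+1) * (2-r) powr (\<alpha>+1)"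
        using r by (simp add: powr_mult)
      have PQ: "c / (\<alpha>+1) * r powr (real CARD('n) + \<alpha>) * (2 - r) powr (\<alpha>+1) = c * Q"
        unfolding n_def[symmetric] e1 Q_def e2 by (simp add: field_simps)
      have nuE: "nu_alpha \<alpha> (Bhat x r) = c * ((m * j) / V)" unfolding nu by simp
      have "m * j \<le> (5/2 * 2^n * V * r^(n-1)) * (real n * ((r*(2-r)) powr (\<alpha>+1) / (2*(\<alpha>+1))))"
        using mU jU m0 j0 V0 r by (intro mult_mono) auto
      also have "\<dots> = V * (C2 * Q)" unfolding C2_def Q_def using a1 by (simp add: field_simps)
      finally have "(m * j) / V \<le> C2 * Q" using V0 by (simp add: divide_le_eq mult.commute)
      then have up: "nu_alpha \<alpha> (Bhat x r) \<le> c * (C2 * Q)" unfolding nuE using c0 by (rule mult_left_mono)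
      have lp: "(1/2) powr (\<alpha>+1) * (r*(2-r)) powr (\<alpha>+1) \<le> (r/2*(2-r/2)) powr (\<alpha>+1)"
      proof -
        have "(1/2) powr (\<alpha>+1) * (r*(2-r)) powr (\<alpha>+1) = ((1/2) * (r*(2-r))) powr (\<alpha>+1)"
          using r by (intro powr_mult[symmetric])
        also have "\<dots> \<le> (r/2*(2-r/2)) powr (\<alpha>+1)"
          using r a1 by (intro powr_mono2) (auto simp: field_simps)
        finally show ?thesis .
      qed
      have "V * (C1 * Q) = (V * r^(n-1) / (2 * 8^n)) * (real n * (1/2)^(n-2) * (((1/2) powr (\<alpha>+1) * (r*(2-r)) powr (\<alpha>+1)) / (2*(\<alpha>+1))))"
        unfolding C1_def Q_def using a1 by (simp add: field_simps)
      also have "\<dots> \<le> (V * r^(n-1) / (2 * 8^n)) * (real n * (1/2)^(n-2) * ((r/2*(2-r/2)) powr (\<alpha>+1) / (2*(\<alpha>+1))))"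
        using lp V0 r a1 by (intro mult_left_mono divide_right_mono) auto
      also have "\<dots> \<le> m * j"
        using mL jL V0 r m0 a1 by (intro mult_mono) auto
      finally have "C1 * Q \<le> (m * j) / V" using V0 by (simp add: le_divide_eq mult.commute)
      then have lo: "c * (C1 * Q) \<le> nu_alpha \<alpha> (Bhat x r)" unfolding nuE using c0 by (rule mult_left_mono)
      have eC1: "C1 * (c / (\<alpha> + 1)) * r powr (real CARD('n) + \<alpha>) * (2 - r) powr (\<alpha> + 1) = C1 * (c / (\<alpha> + 1) * r powr (real CARD('n) + \<alpha>) * (2 - r) powr (\<alpha> + 1))"
        by (simp only: mult.assoc)
      have eC2: "C2 * (c / (\<alpha> + 1)) * r powr (real CARD('n) + \<alpha>) * (2 - r) powr (\<alpha> + 1) = C2 * (c / (\<alpha> + 1) * r powr (real CARD('n) + \<alpha>) * (2 - r) powr (\<alpha> + 1))"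
        by (simp only: mult.assoc)
      show "C1 * (c_alpha \<alpha> TYPE(real^'n) / (\<alpha> + 1)) * r powr (real CARD('n) + \<alpha>) * (2 - r) powr (\<alpha> + 1) \<le> nu_alpha \<alpha> (Bhat x r)"
        unfolding c_def[symmetric] eC1 PQ using lo by (simp add: mult.left_commute)
      show "nu_alpha \<alpha> (Bhat x r) \<le> C2 * (c_alpha \<alpha> TYPE(real^'n) / (\<alpha> + 1)) * r powr (real CARD('n) + \<alpha>) * (2 - r) powr (\<alpha> + 1)"
        unfolding c_def[symmetric] eC2 PQ using up by (simp add: mult.left_commute)
    qed
  qed
qed

end
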